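(* Let $\mathcal G=(\mathcal V,\mathcal E,W)$ be a network, $h\in\mathbb{R}^{\mathcal V}$, and consider the SNC game with binary actions on $\mathcal G$ with external field $h$, with set of Nash equilibria $\mathcal N$. Let $\mathcal V=\mathcal R\cup\mathcal S$, $\mathcal R\cap\mathcal S=\emptyset$, be a binary partition such that $\mathcal G_{\mathcal R}$ is structurally balanced, and let $\tau\in\{\pm1\}^{\mathcal R}$ be such that $\mathcal G_{\mathcal R}^{[\tau]}$ is unsigned. Let $h^-,h^+\in\mathbb{R}^{\mathcal R}$ be given by $$h_i^+=\tau_ih_i+w_i^{\mathcal S},\qquad h_i^-=\tau_ih_i-w_i^{\mathcal S},\qquad i\in\mathcal R.$$ Assume that $\mathcal G_{\mathcal R}^{[\tau]}$ is $(h^-,h^+)$-indecomposable and that $$w_i^{\mathcal R}-|h_i|>w_i^{\mathcal S}\qquad\forall i\in\mathcal R.$$ Then: (i) if, for each $y\in\{\tau,-\tau\}$, the set $\mathcal N_{\mathcal S}^{(y)}$ is globally BR-reachable for the $\mathcal S$-restricted game with strategy profile of players in $\mathcal R$ frozen to $y$, then the set $\overline{\mathcal N}=\{x^*\in\mathcal N:\ x^*_{\mathcal R}\in\{\tau,-\tau\}\}$ is globally BR-reachable for the SNC game; (ii) if, for each $y\in\{\tau,-\tau\}$, there exists a nonempty subset $\bar{\mathcal N}_{\mathcal S}^{(y)}\subseteq\mathcal N_{\mathcal S}^{(y)}$ that is globally BR-stable for the $\mathcal S$-restricted game with strategy profile of players in $\mathcal R$ frozen to $y$, then there exists a globally BR-stable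 (for the SNC game) subset of Nash equilibria contained in $\overline{\mathcal N}$.
   Context: A network is a triple $\mathcal G=(\mathcal V,\mathcal E,W)$ where $\mathcal V$ is a finite nonempty set, $\mathcal E\subseteq\mathcal V\times\mathcal V$, and $W\in\mathbb{R}^{\mathcal V\times\mathcal V}$ has zero diagonal and satisfies $W_{ij}\neq0$ iff $(i,j)\in\mathcal E$ (weights may have either sign; $W$ need not be symmetric). It is unsigned if $W\ge0$ entrywise. For $\mathcal U\subseteq\mathcal V$, the subnetwork $\mathcal G_{\mathcal U}$ has node set $\mathcal U$, links $\mathcal E\cap(\mathcal U\times\mathcal U)$ and weight matrix $W_{\mathcal U\mathcal U}$. A network is structurally balanced if its node set can be written as a disjoint union $\mathcal V_1\cup\mathcal V_2$ with $W_{ij}\ge0$ whenever $i,j$ lie in the same part and $W_{ij}\le0$ whenever they lie in different parts. For $\sigma\in\{\pm1\}^{\mathcal U}$ and a network on node set $\mathcal U$ with weight matrix $M$, the $[\sigma]$-transformed network has the same nodes and links and weight matrix $[\sigma]M[\sigma]$, where $[\sigma]$ is the diagonal matrix with diagonal $\sigma$. For $i\in\mathcal V$ and $\mathcal B\subseteq\mathcal V$, $w_i^{\mathcal B}=\sum_{j\in\mathcal B}|W_{ij}|$ (these quantities are unchanged by $[\sigma]$-transformations). Indecomposability: a network $(\mathcal U,\mathcal E',M)$ with $h^-\le h^+$ in $\mathbb{R}^{\mathcal U}$ is $(h^-,h^+)$-indecomposable if for every partition $\mathcal U=\mathcal U^-\cup\mathcal U^+$ into two disjoint nonempty sets there is a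 node $i$ with either $i\in\mathcal U^+$ and $w_i^{\mathcal U^+}+h_i^+<w_i^{\mathcal U^-}$, or $i\in\mathcal U^-$ and $w_i^{\mathcal U^-}-h_i^-<w_i^{\mathcal U^+}$ (degrees computed with $|M|$). The SNC game with binary actions on $\mathcal G$ with external field $h\in\mathbb{R}^{\mathcal V}$ has player set $\mathcal V$, action set $\{-1,+1\}$ for each player, strategy profiles $\mathcal X=\{\pm1\}^{\mathcal V}$, and utilities $u_i(x)=h_ix_i+x_i\sum_{j\in\mathcal V}W_{ij}x_j$. Best responses $\mathcal B_i(x_{-i})=\arg\max_{x_i\in\{\pm1\}}u_i(x_i,x_{-i})$; Nash equilibrium: $x^*_i\in\mathcal B_i(x^*_{-i})$ for all $i$. For $y\in\{\pm1\}^{\mathcal R}$, the $\mathcal S$-restricted game with strategy profile of players in $\mathcal R$ frozen to $y$ has player set $\mathcal S$, actions $\{\pm1\}$, and utilities $u_i^{(y)}(z)=u_i(y,z)$ for $i\in\mathcal S$, $z\in\{\pm1\}^{\mathcal S}$; $\mathcal N_{\mathcal S}^{(y)}$ is its set of Nash equilibria. BR-dynamics notions, for any game with binary actions and profile set $\mathcal Y$: a BR-path of length $l\ge0$ from $x$ to $y$ is a sequence $x^{(0)}=x,x^{(1)},\dots,x^{(l)}=y$ such that for each $k$ there is a player $i_k$ with $x^{(k)}_{-i_k}=x^{(k-1)}_{-i_k}$ and $x^{(k)}_{i_k}\in\mathcal B_{i_k}(x^{(k-1)}_{-i_k})\setminus\{x^{(k-1)}_{i_k}\}$. A set $\mathcal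 Y^*\subseteq\mathcal Y$ is globally BR-reachable if from every profile there is a BR-path to some element of $\mathcal Y^*$; BR-invariant if there is no BR-path from an element of $\mathcal Y^*$ to an element outside $\mathcal Y^*$; globally BR-stable if it is both. *)

theory Defs
  imports Complex_Main
begin

text \<open>Networks: node set is the finite type 'v (V = UNIV); weights W :: 'v => 'v => real,
  links are exactly the pairs with nonzero weight.\<close>

definition profiles :: "'v set \<Rightarrow> ('v \<Rightarrow> real) set" where
  "profiles P = {x. (\<forall>i\<in>P. x i = 1 \<or> x i = -1) \<and> (\<forall>i. i \<notin> P \<longrightarrow> x i = 0)}"

definition is_best_response ::
  "('v \<Rightarrow> ('v \<Rightarrow> real) \<Rightarrow> real) \<Rightarrow> 'v \<Rightarrow> ('v \<Rightarrow> real) \<Rightarrow> real \<Rightarrow> bool" where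
  "is_best_response u i x a \<longleftrightarrow> (a = 1 \<or> a = -1) \<and>
     (\<forall>b\<in>{1, -1}. u i (x(i := b)) \<le> u i (x(i := a)))"

definition nash_set :: "'v set \<Rightarrow> ('v \<Rightarrow> ('v \<Rightarrow> real) \<Rightarrow> real) \<Rightarrow> ('v \<Rightarrow> real) set" where
  "nash_set P u = {x \<in> profiles P. \<forall>i\<in>P. is_best_response u i x (x i)}"

definition br_step :: "'v set \<Rightarrow> ('v \<Rightarrow> ('v \<Rightarrow> real) \<Rightarrow> real) \<Rightarrow> ('v \<Rightarrow> real) \<Rightarrow> ('v \<Rightarrow> real) \<Rightarrow> bool" where
  "br_step P u x y \<longleftrightarrow> (\<exists>i\<in>P. y = x(i := y i) \<and> y i \<noteq> x i \<and> is_best_response u i x (y i))"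

definition br_path :: "'v set \<Rightarrow> ('v \<Rightarrow> ('v \<Rightarrow> real) \<Rightarrow> real) \<Rightarrow> ('v \<Rightarrow> real) \<Rightarrow> ('v \<Rightarrow> real) \<Rightarrow> bool" where
  "br_path P u x y \<longleftrightarrow> (\<exists>(l::nat) (xs :: nat \<Rightarrow> 'v \<Rightarrow> real).
      xs 0 = x \<and> xs l = y \<and> (\<forall>k<l. br_step P u (xs k) (xs (Suc k))))"

definition glob_br_reachable :: "'v set \<Rightarrow> ('v \<Rightarrow> ('v \<Rightarrow> real) \<Rightarrow> real) \<Rightarrow> ('v \<Rightarrow> real) set \<Rightarrow> bool" where
  "glob_br_reachable P u Y \<longleftrightarrow> (\<forall>x\<in>profiles P. \<exists>y\<in>Y. br_path P u x y)"

definition br_invariant :: "'v set \<Rightarrow> ('v \<Rightarrow> ('v \<Rightarrow> real) \<Rightarrow> real) \<Rightarrow> ('v \<Rightarrow> real) set \<Rightarrow> bool" where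
  "br_invariant P u Y \<longleftrightarrow> (\<forall>x\<in>Y. \<forall>y. br_path P u x y \<longrightarrow> y \<in> Y)"

definition glob_br_stable :: "'v set \<Rightarrow> ('v \<Rightarrow> ('v \<Rightarrow> real) \<Rightarrow> real) \<Rightarrow> ('v \<Rightarrow> real) set \<Rightarrow> bool" where
  "glob_br_stable P u Y \<longleftrightarrow> glob_br_reachable P u Y \<and> br_invariant P u Y"

definition snc_utility :: "('v::finite \<Rightarrow> 'v \<Rightarrow> real) \<Rightarrow> ('v \<Rightarrow> real) \<Rightarrow> 'v \<Rightarrow> ('v \<Rightarrow> real) \<Rightarrow> real" where
  "snc_utility W h i x = h i * x i + x i * (\<Sum>j\<in>UNIV. W i j * x j)"

definition restricted_utility ::
  "('v \<Rightarrow> ('v \<Rightarrow> real) \<Rightarrow> real) \<Rightarrow> 'v set \<Rightarrow> ('v \<Rightarrow> real) \<Rightarrow> 'v \<Rightarrow> ('v \<Rightarrow> real) \<Rightarrow> real" where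
  "restricted_utility u R y i z = u i (\<lambda>j. if j \<in> R then y j else z j)"

definition restrict_prof :: "('v \<Rightarrow> real) \<Rightarrow> 'v set \<Rightarrow> 'v \<Rightarrow> real" where
  "restrict_prof x R = (\<lambda>i. if i \<in> R then x i else 0)"

definition wdeg :: "('v \<Rightarrow> 'v \<Rightarrow> real) \<Rightarrow> 'v \<Rightarrow> 'v set \<Rightarrow> real" where
  "wdeg W i B = (\<Sum>j\<in>B. \<bar>W i j\<bar>)"

definition structurally_balanced :: "'v set \<Rightarrow> ('v \<Rightarrow> 'v \<Rightarrow> real) \<Rightarrow> bool" where
  "structurally_balanced U M \<longleftrightarrow> (\<exists>U1 U2. U1 \<union> U2 = U \<and> U1 \<inter> U2 = {} \<and>
     (\<forall>i\<in>U. \<forall>j\<in>U. ((i \<in> U1 \<longleftrightarrow> j \<in> U1) \<longrightarrow> M i j \<ge> 0) \<and>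
                     ((i \<in> U1 \<longleftrightarrow> j \<notin> U1) \<longrightarrow> M i j \<le> 0)))"

definition transformed :: "('v \<Rightarrow> real) \<Rightarrow> ('v \<Rightarrow> 'v \<Rightarrow> real) \<Rightarrow> 'v \<Rightarrow> 'v \<Rightarrow> real" where
  "transformed \<sigma> M = (\<lambda>i j. \<sigma> i * M i j * \<sigma> j)"

definition unsigned_on :: "'v set \<Rightarrow> ('v \<Rightarrow> 'v \<Rightarrow> real) \<Rightarrow> bool" where
  "unsigned_on U M \<longleftrightarrow> (\<forall>i\<in>U. \<forall>j\<in>U. M i j \<ge> 0)"

definition indecomposable ::
  "'v set \<Rightarrow> ('v \<Rightarrow> 'v \<Rightarrow> real) \<Rightarrow> ('v \<Rightarrow> real) \<Rightarrow> ('v \<Rightarrow> real) \<Rightarrow> bool" where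
  "indecomposable U M hm hp \<longleftrightarrow>
     (\<forall>Um Up. Um \<union> Up = U \<and> Um \<inter> Up = {} \<and> Um \<noteq> {} \<and> Up \<noteq> {} \<longrightarrow>
        (\<exists>i. (i \<in> Up \<and> wdeg M i Up + hp i < wdeg M i Um) \<or>
             (i \<in> Um \<and> wdeg M i Um - hm i < wdeg M i Up)))"

end

theory Submission
  imports Defs
begin

lemma br_path_iff: "br_path P u x y \<longleftrightarrow> (br_step P u)\<^sup>*\<^sup>* x y"
proof
  assume "br_path P u x y"
  then obtain l xs where h: "xs 0 = x" "xs l = y" "\<forall>k<l. br_step P u (xs k) (xs (Suc k))"
    unfolding br_path_def by blast
  have "\<forall>k\<le>l. (br_step P u)\<^sup>*\<^sup>* x (xs k)"
  proof (intro allI impI)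
    fix k assume "k \<le> l" then show "(br_step P u)\<^sup>*\<^sup>* x (xs k)"
    proof (induction k)
      case 0 then show ?case using h by simp
    next
      case (Suc k)
      then have "(br_step P u)\<^sup>*\<^sup>* x (xs k)" by simp
      moreover have "br_step P u (xs k) (xs (Suc k))" using h Suc.prems by simp
      ultimately show ?case by (metis rtranclp.rtrancl_into_rtrancl)
    qed
  qed
  then show "(br_step P u)\<^sup>*\<^sup>* x y" using h by auto
next
  assume "(br_step P u)\<^sup>*\<^sup>* x y"
  then show "br_path P u x y"
  proof (induction rule: rtranclp_induct)
    case base
    show ?case unfolding br_path_def by (rule exI[of _ 0], rule exI[of _ "\<lambda>_. x"]) simp
  next
    case (step y z)
    then obtain l xs where h: "xs 0 = x" "xs l = y" "\<forall>k<l. br_step P u (xs k) (xs (Suc k))"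
      unfolding br_path_def by blast
    define xs' where "xs' = xs(Suc l := z)"
    have "xs' 0 = x" "xs' (Suc l) = z" using h by (auto simp: xs'_def)
    moreover have "\<forall>k<Suc l. br_step P u (xs' k) (xs' (Suc k))"
    proof (intro allI impI)
      fix k assume "k < Suc l"
      then consider "k < l" | "k = l" by linarith
      then show "br_step P u (xs' k) (xs' (Suc k))"
      proof cases
        case 1 then show ?thesis using h by (simp add: xs'_def)
      next
        case 2 then show ?thesis using h step by (simp add: xs'_def)
      qed
    qed
    ultimately show ?case unfolding br_path_def by blast
  qed
qed

lemma step_prof: "x \<in> profiles P \<Longrightarrow> br_step P u x y \<Longrightarrow> y \<in> profiles P"
  unfolding br_step_def profiles_def is_best_response_def
  by (smt (verit, ccfv_SIG) fun_upd_other fun_upd_same mem_Collect_eq)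

locale snc =
  fixes W :: "'v::finite \<Rightarrow> 'v \<Rightarrow> real" and h :: "'v \<Rightarrow> real"
    and R S :: "'v set" and \<tau> :: "'v \<Rightarrow> real"
  assumes diag: "\<forall>i. W i i = 0"
    and part1: "R \<union> S = UNIV" and part2: "R \<inter> S = {}"
    and tau: "\<tau> \<in> profiles R"
    and uns: "unsigned_on R (transformed \<tau> W)"
    and indec: "indecomposable R (transformed \<tau> W)
                  (\<lambda>i. \<tau> i * h i - wdeg W i S) (\<lambda>i. \<tau> i * h i + wdeg W i S)"
    and dom: "\<forall>i\<in>R. wdeg W i R - \<bar>h i\<bar> > wdeg W i S"
begin

abbreviation U where "U \<equiv> snc_utility W h"
abbreviation M where "M \<equiv> transformed \<tau> W"
definition D :: "('v \<Rightarrow> real) \<Rightarrow> 'v \<Rightarrow> real" where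
  "D x i = h i + (\<Sum>j\<in>UNIV. W i j * x j)"
definition Pset :: "('v \<Rightarrow> real) \<Rightarrow> 'v set" where
  "Pset x = {j\<in>R. x j = \<tau> j}"
definition comb :: "('v \<Rightarrow> real) \<Rightarrow> ('v \<Rightarrow> real) \<Rightarrow> 'v \<Rightarrow> real" where
  "comb y z = (\<lambda>j. if j \<in> R then y j else z j)"
definition hp where "hp i = \<tau> i * h i + wdeg W i S"
definition hm where "hm i = \<tau> i * h i - wdeg W i S"
definition downstable where
  "downstable A \<longleftrightarrow> (\<forall>i\<in>A. \<not> (wdeg M i A + hp i < wdeg M i (R - A)))"

abbreviation reach where "reach \<equiv> (br_step UNIV U)\<^sup>*\<^sup>*"

lemma util_upd: "U i (x(i:=b)) = b * D x i"
proof -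
  have "(\<Sum>j\<in>UNIV. W i j * (x(i:=b)) j) = (\<Sum>j\<in>UNIV. W i j * x j)"
    by (rule sum.cong) (auto simp: diag)
  then show ?thesis unfolding snc_utility_def D_def by (simp add: algebra_simps)
qed

lemma br_iff: "is_best_response U i x a \<longleftrightarrow> (a = 1 \<or> a = -1) \<and> (\<forall>b\<in>{1,-1}. b * D x i \<le> a * D x i)"
  by (simp add: is_best_response_def util_upd)

lemma br_unique:
  assumes "c * D x i > 0" "c = 1 \<or> c = -1"
  shows "is_best_response U i x a \<longleftrightarrow> a = c"
  using assms unfolding br_iff by auto

lemma tauR: "i \<in> R \<Longrightarrow> \<tau> i = 1 \<or> \<tau> i = -1"
  using tau unfolding profiles_def by auto
lemma tauNR: "i \<notin> R \<Longrightarrow> \<tau> i = 0"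
  using tau unfolding profiles_def by auto

lemma abs_tau: "i \<in> R \<Longrightarrow> \<bar>\<tau> i\<bar> = 1"
  using tauR[of i] by auto

lemma xvals: "x \<in> profiles UNIV \<Longrightarrow> x j = 1 \<or> x j = -1"
  unfolding profiles_def by auto

lemma notP: "x \<in> profiles UNIV \<Longrightarrow> j \<in> R \<Longrightarrow> j \<notin> Pset x \<Longrightarrow> x j = - \<tau> j"
  using xvals[of x j] tauR[of j] unfolding Pset_def by auto

lemma PsetR: "Pset x \<subseteq> R" unfolding Pset_def by auto

lemma wdeg_M: "i \<in> R \<Longrightarrow> B \<subseteq> R \<Longrightarrow> wdeg M i B = wdeg W i B"
  unfolding wdeg_def transformed_def
proof (rule sum.cong)
  fix j assume "i \<in> R" "B \<subseteq> R" "j \<in> B"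
  then have "\<bar>\<tau> i\<bar> = 1" "\<bar>\<tau> j\<bar> = 1" using abs_tau by auto
  then show "\<bar>\<tau> i * W i j * \<tau> j\<bar> = \<bar>W i j\<bar>" by (simp add: abs_mult)
qed simp

lemma wdeg_mono: "(A::'v set) \<subseteq> B \<Longrightarrow> wdeg N k A \<le> wdeg N k B"
  unfolding wdeg_def by (rule sum_mono2) auto

lemma wdeg_nonneg: "wdeg N k A \<ge> 0"
  unfolding wdeg_def by (rule sum_nonneg) auto

lemma key_bound:
  assumes x: "x \<in> profiles UNIV" and i: "i \<in> R"
  shows "\<bar>\<tau> i * D x i - \<tau> i * h i - (wdeg W i (Pset x) - wdeg W i (R - Pset x))\<bar> \<le> wdeg W i S"
proof -
  have split: "(\<Sum>j\<in>UNIV. \<tau> i * W i j * x j) = (\<Sum>j\<in>R. \<tau> i * W i j * x j) + (\<Sum>j\<in>S. \<tau> i * W i j * x j)"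
    using part1 part2 sum.union_disjoint[of R S "\<lambda>j. \<tau> i * W i j * x j"] by auto
  have eqD: "\<tau> i * D x i = \<tau> i * h i + (\<Sum>j\<in>UNIV. \<tau> i * W i j * x j)"
    unfolding D_def by (simp add: algebra_simps sum_distrib_left)
  have RP: "R = Pset x \<union> (R - Pset x)" using PsetR by auto
  have sR: "(\<Sum>j\<in>R. \<tau> i * W i j * x j) = (\<Sum>j\<in>Pset x. \<tau> i * W i j * x j) + (\<Sum>j\<in>R - Pset x. \<tau> i * W i j * x j)"
    using sum.union_disjoint[of "Pset x" "R - Pset x" "\<lambda>j. \<tau> i * W i j * x j"] RP by auto
  have s1: "(\<Sum>j\<in>Pset x. \<tau> i * W i j * x j) = wdeg W i (Pset x)"
    unfolding wdeg_def
  proof (rule sum.cong)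
    fix j assume j: "j \<in> Pset x"
    then have "x j = \<tau> j" "j \<in> R" unfolding Pset_def by auto
    moreover have "\<tau> i * W i j * \<tau> j \<ge> 0" using uns i \<open>j \<in> R\<close> unfolding unsigned_on_def transformed_def by auto
    moreover have "\<bar>\<tau> i * W i j * \<tau> j\<bar> = \<bar>W i j\<bar>" using abs_tau[OF i] abs_tau[OF \<open>j \<in> R\<close>] by (simp add: abs_mult)
    ultimately show "\<tau> i * W i j * x j = \<bar>W i j\<bar>" by auto
  qed simp
  have s2: "(\<Sum>j\<in>R - Pset x. \<tau> i * W i j * x j) = - wdeg W i (R - Pset x)"
    unfolding wdeg_def sum_negf[symmetric]
  proof (rule sum.cong)
    fix j assume j: "j \<in> R - Pset x"
    then have "x j = - \<tau> j" "j \<in> R" using notP[OF x] by auto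
    moreover have "\<tau> i * W i j * \<tau> j \<ge> 0" using uns i \<open>j \<in> R\<close> unfolding unsigned_on_def transformed_def by auto
    moreover have "\<bar>\<tau> i * W i j * \<tau> j\<bar> = \<bar>W i j\<bar>" using abs_tau[OF i] abs_tau[OF \<open>j \<in> R\<close>] by (simp add: abs_mult)
    ultimately show "\<tau> i * W i j * x j = - \<bar>W i j\<bar>" by auto
  qed simp
  have s3: "\<bar>\<Sum>j\<in>S. \<tau> i * W i j * x j\<bar> \<le> wdeg W i S"
  proof -
    have "\<bar>\<Sum>j\<in>S. \<tau> i * W i j * x j\<bar> \<le> (\<Sum>j\<in>S. \<bar>\<tau> i * W i j * x j\<bar>)" by (rule sum_abs)
    also have "\<dots> = wdeg W i S" unfolding wdeg_def
    proof (rule sum.cong)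
      fix j
      have "\<bar>\<tau> i\<bar> = 1" "\<bar>x j\<bar> = 1" using tauR[OF i] xvals[OF x, of j] by auto
      then show "\<bar>\<tau> i * W i j * x j\<bar> = \<bar>W i j\<bar>" by (simp add: abs_mult)
    qed simp
    finally show ?thesis .
  qed
  show ?thesis using eqD split sR s1 s2 s3 by linarith
qed


lemma cons_strict:
  assumes x: "x \<in> profiles UNIV" and r: "restrict_prof x R \<in> {\<tau>, (\<lambda>i. - \<tau> i)}" and i: "i \<in> R"
  shows "x i * D x i > 0"
proof -
  note kb = key_bound[OF x i]
  have hb: "\<tau> i * h i \<ge> - \<bar>h i\<bar>" "\<tau> i * h i \<le> \<bar>h i\<bar>" using tauR[OF i] by auto
  have d: "wdeg W i R - \<bar>h i\<bar> > wdeg W i S" using dom i by auto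
  have w0: "wdeg W i {} = 0" unfolding wdeg_def by simp
  have kb1: "\<tau> i * D x i - \<tau> i * h i - (wdeg W i (Pset x) - wdeg W i (R - Pset x)) \<le> wdeg W i S"
    and kb2: "- (\<tau> i * D x i - \<tau> i * h i - (wdeg W i (Pset x) - wdeg W i (R - Pset x))) \<le> wdeg W i S"
    using kb unfolding abs_le_iff by auto
  from r consider "restrict_prof x R = \<tau>" | "restrict_prof x R = (\<lambda>i. - \<tau> i)" by blast
  then show ?thesis
  proof cases
    case 1
    have xe: "x j = \<tau> j" if j: "j \<in> R" for j
    proof -
      have "restrict_prof x R j = \<tau> j" using 1 by simp
      then show ?thesis using j by (simp add: restrict_prof_def)
    qed
    then have P: "Pset x = R" unfolding Pset_def by auto
    have "\<tau> i * D x i > 0" using kb2 hb d w0 unfolding P by simp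
    then show ?thesis using xe[OF i] by simp
  next
    case 2
    have xe: "x j = - \<tau> j" if j: "j \<in> R" for j
    proof -
      have "restrict_prof x R j = - \<tau> j" using 2 by simp
      then show ?thesis using j by (simp add: restrict_prof_def)
    qed
    have P: "Pset x = {}" unfolding Pset_def using tauR xe by force
    have "\<tau> i * D x i < 0" using kb1 hb d w0 unfolding P by simp
    then show ?thesis using xe[OF i] by simp
  qed
qed

lemma frozen_br:
  assumes x: "x \<in> profiles UNIV" and r: "restrict_prof x R \<in> {\<tau>, (\<lambda>i. - \<tau> i)}" and i: "i \<in> R"
  shows "is_best_response U i x a \<longleftrightarrow> a = x i"
  by (rule br_unique[OF cons_strict[OF x r i] xvals[OF x]])

lemma down_flip:
  assumes x: "x \<in> profiles UNIV" and i: "i \<in> Pset x"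
    and c: "wdeg M i (Pset x) + hp i < wdeg M i (R - Pset x)"
  shows "br_step UNIV U x (x(i := - \<tau> i))" "Pset (x(i := - \<tau> i)) = Pset x - {i}"
    "x(i := - \<tau> i) \<in> profiles UNIV"
proof -
  have iR: "i \<in> R" and xi: "x i = \<tau> i" using i unfolding Pset_def by auto
  have c': "wdeg W i (Pset x) + hp i < wdeg W i (R - Pset x)"
    using c wdeg_M[OF iR PsetR] wdeg_M[OF iR, of "R - Pset x"] by auto
  have "\<tau> i * D x i < 0" using key_bound[OF x iR] c' unfolding hp_def abs_le_iff by linarith
  then have pos: "(- \<tau> i) * D x i > 0" by simp
  have br: "is_best_response U i x (- \<tau> i)"
    using br_unique[OF pos] tauR[OF iR] by auto
  have ne: "- \<tau> i \<noteq> x i" using xi tauR[OF iR] by auto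
  show "br_step UNIV U x (x(i := - \<tau> i))" unfolding br_step_def
    using br ne by (intro bexI[of _ i]) auto
  show "Pset (x(i := - \<tau> i)) = Pset x - {i}" unfolding Pset_def using ne xi by auto
  show "x(i := - \<tau> i) \<in> profiles UNIV" using x tauR[OF iR] unfolding profiles_def by auto
qed

lemma up_flip:
  assumes x: "x \<in> profiles UNIV" and i: "i \<in> R - Pset x"
    and c: "wdeg M i (R - Pset x) - hm i < wdeg M i (Pset x)"
  shows "br_step UNIV U x (x(i := \<tau> i))" "Pset (x(i := \<tau> i)) = insert i (Pset x)"
    "x(i := \<tau> i) \<in> profiles UNIV"
proof -
  have iR: "i \<in> R" and xi: "x i = - \<tau> i" using i notP[OF x] by auto
  have c': "wdeg W i (R - Pset x) - hm i < wdeg W i (Pset x)"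
    using c wdeg_M[OF iR PsetR] wdeg_M[OF iR, of "R - Pset x"] by auto
  have pos: "\<tau> i * D x i > 0" using key_bound[OF x iR] c' unfolding hm_def abs_le_iff by linarith
  have br: "is_best_response U i x (\<tau> i)"
    using br_unique[OF pos] tauR[OF iR] by auto
  have ne: "\<tau> i \<noteq> x i" using xi tauR[OF iR] by auto
  show "br_step UNIV U x (x(i := \<tau> i))" unfolding br_step_def
    using br ne by (intro bexI[of _ i]) auto
  show "Pset (x(i := \<tau> i)) = insert i (Pset x)" unfolding Pset_def using iR by auto
  show "x(i := \<tau> i) \<in> profiles UNIV" using x tauR[OF iR] unfolding profiles_def by auto
qed

lemma peel: "x \<in> profiles UNIV \<Longrightarrow> \<exists>x'. reach x x' \<and> x' \<in> profiles UNIV \<and> downstable (Pset x')"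
proof (induction "card (Pset x)" arbitrary: x rule: less_induct)
  case less
  show ?case
  proof (cases "downstable (Pset x)")
    case True then show ?thesis using less.prems by blast
  next
    case False
    then obtain i where i: "i \<in> Pset x" and c: "wdeg M i (Pset x) + hp i < wdeg M i (R - Pset x)"
      unfolding downstable_def by blast
    note f = down_flip[OF less.prems i c]
    have "card (Pset (x(i := - \<tau> i))) < card (Pset x)"
      unfolding f(2) using i by (intro card_Diff1_less) auto
    from less.hyps[OF this f(3)] obtain x' where "reach (x(i := - \<tau> i)) x'" "x' \<in> profiles UNIV" "downstable (Pset x')"
      by blast
    then show ?thesis using converse_rtranclp_into_rtranclp[of "br_step UNIV U", OF f(1)] by blast
  qed
qed

lemma grow: "x \<in> profiles UNIV \<Longrightarrow> downstable (Pset x) \<Longrightarrow> Pset x \<noteq> {} \<Longrightarrow>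
   \<exists>x'. reach x x' \<and> x' \<in> profiles UNIV \<and> Pset x' = R"
proof (induction "card (R - Pset x)" arbitrary: x rule: less_induct)
  case less
  show ?case
  proof (cases "Pset x = R")
    case True then show ?thesis using less.prems by blast
  next
    case False
    let ?P = "Pset x"
    have "R - ?P \<union> ?P = R" "(R - ?P) \<inter> ?P = {}" "R - ?P \<noteq> {}" "?P \<noteq> {}"
      using PsetR False less.prems by auto
    then obtain i where
      "(i \<in> ?P \<and> wdeg M i ?P + hp i < wdeg M i (R - ?P)) \<or>
       (i \<in> R - ?P \<and> wdeg M i (R - ?P) - hm i < wdeg M i ?P)"
      using indec unfolding indecomposable_def hp_def hm_def by blast
    then have i: "i \<in> R - ?P" and c: "wdeg M i (R - ?P) - hm i < wdeg M i ?P"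
      using less.prems(2) unfolding downstable_def by auto
    note f = up_flip[OF less.prems(1) i c]
    have hmp: "hm k \<le> hp k" for k unfolding hm_def hp_def using wdeg_nonneg[of W k S] by simp
    have ds: "downstable (insert i ?P)"
      unfolding downstable_def
    proof
      fix k assume k: "k \<in> insert i ?P"
      have m1: "wdeg M k ?P \<le> wdeg M k (insert i ?P)" by (rule wdeg_mono) auto
      have m2: "wdeg M k (R - insert i ?P) \<le> wdeg M k (R - ?P)" by (rule wdeg_mono) auto
      show "\<not> wdeg M k (insert i ?P) + hp k < wdeg M k (R - insert i ?P)"
      proof (cases "k = i")
        case True then show ?thesis using c m1 m2 hmp[of i] by auto
      next
        case False then have "k \<in> ?P" using k by auto
        then show ?thesis using less.prems(2) m1 m2 unfolding downstable_def by force
      qed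
    qed
    have eq: "R - insert i ?P = (R - ?P) - {i}" by auto
    have cd: "card (R - Pset (x(i := \<tau> i))) < card (R - Pset x)"
      unfolding f(2) eq using i by (intro card_Diff1_less) auto
    have ds': "downstable (Pset (x(i := \<tau> i)))" using ds unfolding f(2) .
    have ne': "Pset (x(i := \<tau> i)) \<noteq> {}" unfolding f(2) by simp
    obtain x' where x': "reach (x(i := \<tau> i)) x'" "x' \<in> profiles UNIV" "Pset x' = R"
      using less.hyps[OF cd f(3) ds' ne'] by blast
    have "reach x x'" using converse_rtranclp_into_rtranclp[of "br_step UNIV U", OF f(1) x'(1)] .
    then show ?thesis using x'(2,3) by blast
  qed
qed

lemma cons_reach: "x \<in> profiles UNIV \<Longrightarrow>
  \<exists>x'. reach x x' \<and> x' \<in> profiles UNIV \<and> restrict_prof x' R \<in> {\<tau>, (\<lambda>i. - \<tau> i)}"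
proof -
  assume x: "x \<in> profiles UNIV"
  obtain x1 where x1: "reach x x1" "x1 \<in> profiles UNIV" "downstable (Pset x1)"
    using peel[OF x] by blast
  show ?thesis
  proof (cases "Pset x1 = {}")
    case True
    have "restrict_prof x1 R = (\<lambda>i. - \<tau> i)"
    proof
      fix j show "restrict_prof x1 R j = - \<tau> j"
        using notP[OF x1(2), of j] True tauNR[of j] unfolding restrict_prof_def by auto
    qed
    then show ?thesis using x1 by (intro exI[of _ x1]) simp
  next
    case False
    obtain x2 where x2: "reach x1 x2" "x2 \<in> profiles UNIV" "Pset x2 = R"
      using grow[OF x1(2,3) False] by blast
    have "restrict_prof x2 R = \<tau>"
    proof
      fix j show "restrict_prof x2 R j = \<tau> j"
        using x2(3) tauNR[of j] unfolding restrict_prof_def Pset_def by auto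
    qed
    then show ?thesis using x1(2) x2(2) rtranclp_trans[OF x1(1) x2(1)] by (intro exI[of _ x2]) simp
  qed
qed


abbreviation RU where "RU y \<equiv> restricted_utility U R y"

lemma comb_upd: "i \<notin> R \<Longrightarrow> comb y (z(i:=b)) = (comb y z)(i:=b)"
  unfolding comb_def by auto

lemma br_ru: assumes "i \<in> S"
  shows "is_best_response (RU y) i z a \<longleftrightarrow> is_best_response U i (comb y z) a"
proof -
  have iR: "i \<notin> R" using assms part2 by auto
  have "RU y i (z(i:=b)) = U i ((comb y z)(i:=b))" for b
    unfolding restricted_utility_def using comb_upd[OF iR, of y z b] by (simp add: comb_def)
  then show ?thesis unfolding is_best_response_def by simp
qed

lemma SnR: "i \<in> S \<Longrightarrow> i \<notin> R" using part2 by auto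
lemma nRS: "i \<notin> R \<Longrightarrow> i \<in> S" using part1 by auto

lemma lift_step: assumes "br_step S (RU y) z z'"
  shows "br_step UNIV U (comb y z) (comb y z')"
proof -
  obtain i where i: "i \<in> S" "z' = z(i := z' i)" "z' i \<noteq> z i" "is_best_response (RU y) i z (z' i)"
    using assms unfolding br_step_def by blast
  have iR: "i \<notin> R" using SnR[OF i(1)] .
  have e: "comb y z' = (comb y z)(i := comb y z' i)"
    using comb_upd[OF iR, of y z "z' i"] i(2) iR by (simp add: comb_def)
  have "comb y z' i \<noteq> comb y z i" using i(3) iR by (simp add: comb_def)
  moreover have "is_best_response U i (comb y z) (comb y z' i)"
    using i(4) br_ru[OF i(1)] iR by (simp add: comb_def)
  ultimately show ?thesis unfolding br_step_def using e by blast
qed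

lemma lift_reach: "(br_step S (RU y))\<^sup>*\<^sup>* z z' \<Longrightarrow> reach (comb y z) (comb y z')"
proof (induction rule: rtranclp_induct)
  case base then show ?case by simp
next
  case (step a b) then show ?case using lift_step
    by (metis rtranclp.rtrancl_into_rtrancl)
qed

lemma comb_prof: "y \<in> {\<tau>, (\<lambda>i. - \<tau> i)} \<Longrightarrow> z \<in> profiles S \<Longrightarrow> comb y z \<in> profiles UNIV"
  unfolding profiles_def comb_def using tauR nRS by fastforce

lemma restrict_comb: "y \<in> {\<tau>, (\<lambda>i. - \<tau> i)} \<Longrightarrow> restrict_prof (comb y z) R = y"
  unfolding restrict_prof_def comb_def using tauNR by fastforce

lemma decomp: assumes "x \<in> profiles UNIV" "restrict_prof x R = y"
  shows "x = comb y (restrict_prof x S)" "restrict_prof x S \<in> profiles S"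
proof -
  show "x = comb y (restrict_prof x S)"
  proof
    fix j show "x j = comb y (restrict_prof x S) j"
    proof (cases "j \<in> R")
      case True
      have "restrict_prof x R j = y j" using assms(2) by simp
      then show ?thesis using True by (simp add: restrict_prof_def comb_def)
    next
      case False then show ?thesis using nRS[OF False] by (simp add: restrict_prof_def comb_def)
    qed
  qed
  show "restrict_prof x S \<in> profiles S" using assms(1) unfolding profiles_def restrict_prof_def by auto
qed

lemma proj: assumes y: "y \<in> {\<tau>, (\<lambda>i. - \<tau> i)}" and z: "z \<in> profiles S"
  and r: "reach (comb y z) x'"
  shows "\<exists>z'. x' = comb y z' \<and> z' \<in> profiles S \<and> (br_step S (RU y))\<^sup>*\<^sup>* z z'"
  using r
proof (induction rule: rtranclp_induct)
  case base then show ?case using z by blast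
next
  case (step a b)
  then obtain z' where z': "a = comb y z'" "z' \<in> profiles S" "(br_step S (RU y))\<^sup>*\<^sup>* z z'" by blast
  obtain i where i: "b = a(i := b i)" "b i \<noteq> a i" "is_best_response U i a (b i)"
    using step(2) unfolding br_step_def by blast
  have ap: "a \<in> profiles UNIV" using comb_prof[OF y z'(2)] z'(1) by simp
  have ar: "restrict_prof a R \<in> {\<tau>, (\<lambda>i. - \<tau> i)}" using restrict_comb[OF y] z'(1) y by simp
  have iR: "i \<notin> R"
  proof
    assume "i \<in> R"
    then have "b i = a i" using frozen_br[OF ap ar] i(3) by blast
    then show False using i(2) by simp
  qed
  have iS: "i \<in> S" using nRS[OF iR] .
  define z'' where "z'' = z'(i := b i)"
  have bc: "b = comb y z''" unfolding z''_def using i(1) z'(1) comb_upd[OF iR] by simp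
  have bv: "b i = 1 \<or> b i = -1" using i(3) unfolding is_best_response_def by blast
  have zp: "z'' \<in> profiles S" using z'(2) bv iS unfolding profiles_def z''_def by auto
  have ai: "a i = z' i" using z'(1) iR by (simp add: comb_def)
  have "br_step S (RU y) z' z''"
    unfolding br_step_def
  proof (intro bexI[of _ i] conjI)
    show "z'' = z'(i := z'' i)" unfolding z''_def by simp
    show "z'' i \<noteq> z' i" unfolding z''_def using i(2) ai by simp
    show "is_best_response (RU y) i z' (z'' i)" unfolding br_ru[OF iS] z''_def
      using i(3) z'(1) by simp
  qed (rule iS)
  then have "(br_step S (RU y))\<^sup>*\<^sup>* z z''" using z'(3) by (meson rtranclp.rtrancl_into_rtrancl)
  then show ?case using bc zp by blast
qed

lemma nash_comb: assumes y: "y \<in> {\<tau>, (\<lambda>i. - \<tau> i)}" and z: "z \<in> nash_set S (RU y)"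
  shows "comb y z \<in> nash_set UNIV U"
proof -
  have zp: "z \<in> profiles S" and zb: "\<forall>i\<in>S. is_best_response (RU y) i z (z i)"
    using z unfolding nash_set_def by auto
  have cp: "comb y z \<in> profiles UNIV" by (rule comb_prof[OF y zp])
  have cr: "restrict_prof (comb y z) R \<in> {\<tau>, (\<lambda>i. - \<tau> i)}" using restrict_comb[OF y] y by simp
  have "is_best_response U i (comb y z) (comb y z i)" for i
  proof (cases "i \<in> R")
    case True then show ?thesis using frozen_br[OF cp cr True] by simp
  next
    case False
    then have iS: "i \<in> S" by (rule nRS)
    have "is_best_response (RU y) i z (z i)" using zb iS by blast
    then have "is_best_response U i (comb y z) (z i)" using br_ru[OF iS] by blast
    then show ?thesis using False by (simp add: comb_def)
  qed
  then show ?thesis using cp unfolding nash_set_def by auto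
qed

end

theorem theorem2:
  fixes W :: "'v::finite \<Rightarrow> 'v \<Rightarrow> real" and h :: "'v \<Rightarrow> real"
    and R S :: "'v set" and \<tau> :: "'v \<Rightarrow> real"
  assumes diag: "\<forall>i. W i i = 0"
    and part: "R \<union> S = UNIV" "R \<inter> S = {}"
    and bal: "structurally_balanced R W"
    and tau: "\<tau> \<in> profiles R"
    and uns: "unsigned_on R (transformed \<tau> W)"
    and indec: "indecomposable R (transformed \<tau> W)
                  (\<lambda>i. \<tau> i * h i - wdeg W i S) (\<lambda>i. \<tau> i * h i + wdeg W i S)"
    and dom: "\<forall>i\<in>R. wdeg W i R - \<bar>h i\<bar> > wdeg W i S"
  shows
   "((\<forall>y\<in>{\<tau>, (\<lambda>i. - \<tau> i)}.
        glob_br_reachable S (restricted_utility (snc_utility W h) R y)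
          (nash_set S (restricted_utility (snc_utility W h) R y)))
     \<longrightarrow> glob_br_reachable UNIV (snc_utility W h)
          {x \<in> nash_set UNIV (snc_utility W h). restrict_prof x R \<in> {\<tau>, (\<lambda>i. - \<tau> i)}})
    \<and>
    ((\<forall>y\<in>{\<tau>, (\<lambda>i. - \<tau> i)}. \<exists>N. N \<noteq> {} \<and>
        N \<subseteq> nash_set S (restricted_utility (snc_utility W h) R y) \<and>
        glob_br_stable S (restricted_utility (snc_utility W h) R y) N)
     \<longrightarrow> (\<exists>N. N \<subseteq> {x \<in> nash_set UNIV (snc_utility W h). restrict_prof x R \<in> {\<tau>, (\<lambda>i. - \<tau> i)}} \<and>
             glob_br_stable UNIV (snc_utility W h) N))"
  proof -
  interpret snc W h R S \<tau>
    using diag part tau uns indec dom by unfold_locales auto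
  let ?Y = "{\<tau>, (\<lambda>i. - \<tau> i)}"
  let ?Nb = "{x \<in> nash_set UNIV (snc_utility W h). restrict_prof x R \<in> {\<tau>, (\<lambda>i. - \<tau> i)}}"
  have gen: "\<exists>x'\<in>F. br_path UNIV U x x'"
    if x: "x \<in> profiles UNIV"
    and Hf: "\<And>y z. y \<in> ?Y \<Longrightarrow> z \<in> profiles S \<Longrightarrow> \<exists>z''. comb y z'' \<in> F \<and> (br_step S (RU y))\<^sup>*\<^sup>* z z''"
    for x F
  proof -
    obtain x' where x': "reach x x'" "x' \<in> profiles UNIV" "restrict_prof x' R \<in> ?Y"
      using cons_reach[OF x] by blast
    define y where "y = restrict_prof x' R"
    have y: "y \<in> ?Y" using x'(3) y_def by simp
    note dc = decomp[OF x'(2) y_def[symmetric]]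
    obtain z'' where z'': "comb y z'' \<in> F" "(br_step S (RU y))\<^sup>*\<^sup>* (restrict_prof x' S) z''"
      using Hf[OF y dc(2)] by blast
    have "reach (comb y (restrict_prof x' S)) (comb y z'')" by (rule lift_reach[OF z''(2)])
    then have "reach x' (comb y z'')" using dc(1) by simp
    then have "reach x (comb y z'')" using x'(1) by simp
    then show ?thesis using z''(1) br_path_iff by blast
  qed
  have A: "(\<forall>y\<in>?Y. glob_br_reachable S (RU y) (nash_set S (RU y))) \<longrightarrow> glob_br_reachable UNIV U ?Nb"
  proof
    assume H: "\<forall>y\<in>?Y. glob_br_reachable S (RU y) (nash_set S (RU y))"
    show "glob_br_reachable UNIV U ?Nb" unfolding glob_br_reachable_def
    proof
      fix x :: "'v \<Rightarrow> real" assume x: "x \<in> profiles UNIV"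
      show "\<exists>x'\<in>?Nb. br_path UNIV U x x'"
      proof (rule gen[OF x])
        fix y z assume y: "y \<in> ?Y" and z: "z \<in> profiles S"
        obtain z'' where "z'' \<in> nash_set S (RU y)" "br_path S (RU y) z z''"
          using H y z unfolding glob_br_reachable_def by blast
        moreover have "comb y z'' \<in> ?Nb" if "z'' \<in> nash_set S (RU y)" for z''
          using nash_comb[OF y that] restrict_comb[OF y] y by simp
        ultimately show "\<exists>z''. comb y z'' \<in> ?Nb \<and> (br_step S (RU y))\<^sup>*\<^sup>* z z''"
          using br_path_iff by blast
      qed
    qed
  qed
  have B: "(\<forall>y\<in>?Y. \<exists>N. N \<noteq> {} \<and> N \<subseteq> nash_set S (RU y) \<and> glob_br_stable S (RU y) N)
     \<longrightarrow> (\<exists>N. N \<subseteq> ?Nb \<and> glob_br_stable UNIV U N)"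
  proof
    assume H: "\<forall>y\<in>?Y. \<exists>N. N \<noteq> {} \<and> N \<subseteq> nash_set S (RU y) \<and> glob_br_stable S (RU y) N"
    then obtain f where f: "\<And>y. y \<in> ?Y \<Longrightarrow> f y \<subseteq> nash_set S (RU y) \<and> glob_br_stable S (RU y) (f y)"
      by metis
    define NN where "NN = {comb y z | y z. y \<in> ?Y \<and> z \<in> f y}"
    have sub: "NN \<subseteq> ?Nb"
    proof
      fix x assume "x \<in> NN"
      then obtain y z where yz: "x = comb y z" "y \<in> ?Y" "z \<in> f y" unfolding NN_def by blast
      have "z \<in> nash_set S (RU y)" using f[OF yz(2)] yz(3) by blast
      then show "x \<in> ?Nb" using nash_comb[OF yz(2)] restrict_comb[OF yz(2)] yz(1,2) by simp
    qed
    have reach: "glob_br_reachable UNIV U NN" unfolding glob_br_reachable_def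
    proof
      fix x :: "'v \<Rightarrow> real" assume x: "x \<in> profiles UNIV"
      show "\<exists>x'\<in>NN. br_path UNIV U x x'"
      proof (rule gen[OF x])
        fix y z assume y: "y \<in> ?Y" and z: "z \<in> profiles S"
        obtain z'' where "z'' \<in> f y" "br_path S (RU y) z z''"
          using f[OF y] z unfolding glob_br_stable_def glob_br_reachable_def by blast
        then show "\<exists>z''. comb y z'' \<in> NN \<and> (br_step S (RU y))\<^sup>*\<^sup>* z z''"
          using br_path_iff y unfolding NN_def by blast
      qed
    qed
    have inv: "br_invariant UNIV U NN" unfolding br_invariant_def
    proof (intro ballI allI impI)
      fix x x' :: "'v \<Rightarrow> real" assume x: "x \<in> NN" and p: "br_path UNIV U x x'"
      then obtain y z where yz: "x = comb y z" "y \<in> ?Y" "z \<in> f y" unfolding NN_def by blast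
      have "z \<in> nash_set S (RU y)" using f[OF yz(2)] yz(3) by blast
      then have zp: "z \<in> profiles S" unfolding nash_set_def by blast
      have "reach (comb y z) x'" using p yz(1) br_path_iff by blast
      from proj[OF yz(2) zp this] obtain z' where z': "x' = comb y z'" "(br_step S (RU y))\<^sup>*\<^sup>* z z'"
        by blast
      have "br_invariant S (RU y) (f y)" using f[OF yz(2)] unfolding glob_br_stable_def by blast
      then have "z' \<in> f y" using yz(3) z'(2) br_path_iff unfolding br_invariant_def by blast
      then show "x' \<in> NN" using z'(1) yz(2) unfolding NN_def by blast
    qed
    show "\<exists>N. N \<subseteq> ?Nb \<and> glob_br_stable UNIV U N"
      using sub reach inv unfolding glob_br_stable_def by blast
  qed
  show ?thesis using A B by blast
qed

end
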